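(* Let $A$ be a $d\times d$ $\{0,1\}$-matrix and $\mathbb{F}\in\{\mathbb{R},\mathbb{C}\}$. For $K\in\mathcal{STAF}(A)$ and $n\in\mathbb{N}$ let $\mathbf{K}^{(n)}\in\mathbb{F}^d$ have $j$-th component $K(s_0\dots s_{n-1}j)$ for any allowable block $s_0\dots s_{n-1}j$ (for $n=0$, $K(j)$). Then $\mathbf{K}=(\mathbf{K}^{(0)},\mathbf{K}^{(1)},\dots)$ is a thread of $A$, and $K\mapsto\mathbf{K}$ is a vector space isomorphism from $\mathcal{STAF}(A)$ onto $\varprojlim(\mathbb{F}^d,A)$. Moreover $\varprojlim(\mathbb{F}^d,A)$ is isomorphic to $NonN(A,\mathbb{F}^d)$.
   Context: Symbols are $S=\{1,\dots,d\}$; $i\to j$ is an allowable transition iff $A_{ij}=1$. An allowable block is a finite word $s_0\dots s_{n-1}$ with $s_k\to s_{k+1}$ for all $k$; its length is the number of symbols; $\mathcal{B}(A)$ is the set of allowable blocks. A symbolic transverse arc function (staf) is a map $K:\mathcal{B}(A)\to\mathbb{F}$ which is additive, $K(s_0\dots s_{n-1}j)=\sum_{k:\,j\to k}K(s_0\dots s_{n-1}jk)$ for every allowable block $s_0\dots s_{n-1}j$, and coherent, $K(s_0\dots s_nj)=K(s_0'\dots s_n'j)$ for all allowable blocks of the same length ending in the same symbol. $\mathcal{STAF}(A)$ is the vector space of stafs. A thread of $A$ is a sequence $(\vec v_0,\vec v_1,\dots)$ in $\mathbb{F}^d$ with $\vec v_n=A\vec v_{n+1}$ for all $n$; $\varprojlim(\mathbb{F}^d,A)$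 is the space of threads. $NonN(A,\mathbb{F}^d)$ is the sum of the generalized eigenspaces of $A$ for nonzero eigenvalues. *)

theory Defs
  imports "HOL-Analysis.Analysis"
begin

text \<open>Symbols are the elements of a finite type 'n (so d = CARD('n)).
  The {0,1}-matrix A is given as a real matrix with entries 0 or 1;
  i \<rightarrow> j iff A$i$j = 1.  Over a field 'f (real or complex) it acts
  through the entrywise embedding.\<close>

definition fmat :: "real^'n^'n \<Rightarrow> ('f::real_algebra_1)^'n^'n" where
  "fmat A = (\<chi> i j. of_real (A$i$j))"

definition allowable :: "real^'n^'n \<Rightarrow> 'n list \<Rightarrow> bool" where
  "allowable A xs \<longleftrightarrow> xs \<noteq> [] \<and> (\<forall>k. Suc k < length xs \<longrightarrow> A$(xs!k)$(xs!Suc k) = 1)"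

text \<open>Stafs: maps on allowable blocks (represented as functions on all words
  that vanish off the allowable blocks) that are additive and coherent.\<close>
definition staf_space :: "real^'n^'n \<Rightarrow> ('n list \<Rightarrow> 'f::field) set" where
  "staf_space A = {K.
     (\<forall>xs. \<not> allowable A xs \<longrightarrow> K xs = 0) \<and>
     (\<forall>w j. allowable A (w @ [j]) \<longrightarrow>
        K (w @ [j]) = (\<Sum>k\<in>{k. A$j$k = 1}. K (w @ [j, k]))) \<and>
     (\<forall>w w' j. allowable A (w @ [j]) \<and> allowable A (w' @ [j]) \<and> length w = length w'
        \<longrightarrow> K (w @ [j]) = K (w' @ [j]))}"

definition threads :: "real^'n^'n \<Rightarrow> (nat \<Rightarrow> ('f::real_algebra_1)^'n) set" where
  "threads A = {v. \<forall>n. v n = fmat A *v v (Suc n)}"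

definition represents :: "real^'n^'n \<Rightarrow> ('n list \<Rightarrow> 'f) \<Rightarrow> (nat \<Rightarrow> 'f^'n) \<Rightarrow> bool" where
  "represents A K v \<longleftrightarrow>
     (\<forall>n w j. allowable A (w @ [j]) \<and> length w = n \<longrightarrow> v n $ j = K (w @ [j]))"

definition thread_of :: "real^'n^'n \<Rightarrow> ('n list \<Rightarrow> 'f::real_algebra_1) \<Rightarrow> (nat \<Rightarrow> 'f^'n)" where
  "thread_of A K = (THE v. v \<in> threads A \<and> represents A K v)"

definition gen_eigenspace :: "complex^'n^'n \<Rightarrow> complex \<Rightarrow> (complex^'n) set" where
  "gen_eigenspace M e = {v. \<exists>k. ((\<lambda>x. (M - mat e) *v x) ^^ k) v = 0}"

definition NonN_complex :: "real^'n^'n \<Rightarrow> (complex^'n) set" where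
  "NonN_complex A = {v. \<exists>S f. finite S \<and> 0 \<notin> S \<and>
      (\<forall>e\<in>S. f e \<in> gen_eigenspace (fmat A) e) \<and> v = (\<Sum>e\<in>S. f e)}"

definition NonN_real :: "real^'n^'n \<Rightarrow> (real^'n) set" where
  "NonN_real A = {v. (\<chi> i. complex_of_real (v$i)) \<in> NonN_complex A}"

definition staf_thread_claim :: "real^'n^'n \<Rightarrow> (('f::{field,real_algebra_1})^'n) set \<Rightarrow> bool" where
  "staf_thread_claim A N \<longleftrightarrow>
     (\<forall>K \<in> (staf_space A :: ('n list \<Rightarrow> 'f) set).
        \<exists>!v. v \<in> threads A \<and> represents A K v) \<and>
     (\<forall>K \<in> (staf_space A :: ('n list \<Rightarrow> 'f) set). \<forall>L \<in> staf_space A. \<forall>c::'f.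
        thread_of A (\<lambda>x. K x + L x) = (\<lambda>n. thread_of A K n + thread_of A L n) \<and>
        thread_of A (\<lambda>x. c * K x) = (\<lambda>n. c *s thread_of A K n)) \<and>
     bij_betw (thread_of A) (staf_space A :: ('n list \<Rightarrow> 'f) set) (threads A) \<and>
     (\<exists>\<Psi> :: (nat \<Rightarrow> 'f^'n) \<Rightarrow> 'f^'n.
        (\<forall>v \<in> threads A. \<forall>u \<in> threads A. \<forall>c::'f.
           \<Psi> (\<lambda>n. v n + u n) = \<Psi> v + \<Psi> u \<and> \<Psi> (\<lambda>n. c *s v n) = c *s \<Psi> v) \<and>
        bij_betw \<Psi> (threads A) N)"

end

theory Submission
  imports Defs "HOL-Computational_Algebra.Fundamental_Theorem_Algebra" "HOL-Computational_Algebra.Polynomial_Factorial" "HOL-Computational_Algebra.Field_as_Ring"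
begin


lemma allowable_succ: "allowable A xs \<longleftrightarrow> xs \<noteq> [] \<and> successively (\<lambda>a b. A$a$b = 1) xs"
  unfolding allowable_def successively_conv_nth by auto

definition hasPast :: "real^'n^'n \<Rightarrow> nat \<Rightarrow> 'n \<Rightarrow> bool" where
  "hasPast A n j \<longleftrightarrow> (\<exists>w. allowable A (w@[j]) \<and> length w = n)"

lemma hasPast_mono:
  assumes "hasPast A n j" "m \<le> n" shows "hasPast A m j"
proof -
  obtain w where w: "allowable A (w@[j])" "length w = n" using assms(1) hasPast_def by blast
  let ?w = "drop (n-m) w"
  have "w @ [j] = take (n-m) w @ (?w @ [j])" by simp
  then have "successively (\<lambda>a b. A$a$b = 1) (take (n-m) w @ (?w @ [j]))"
    using w(1) unfolding allowable_succ by (simp only: append.assoc[symmetric] append_take_drop_id)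
  then have "allowable A (?w @ [j])" by (simp only: successively_append_iff allowable_succ) simp
  moreover have "length ?w = m" using w(2) assms(2) by simp
  ultimately show ?thesis unfolding hasPast_def by blast
qed

lemma hasPast_extend:
  assumes "hasPast A L y" "successively (\<lambda>a b. A$a$b = 1) (y # zs)"
  shows "hasPast A (L + length zs) (last (y # zs))"
proof -
  obtain w where w: "allowable A (w@[y])" "length w = L" using assms(1) hasPast_def by blast
  have s: "successively (\<lambda>a b. A$a$b = 1) ((w@[y]) @ zs)"
    using w(1) assms(2) unfolding allowable_succ successively_append_iff
    by (cases zs) (auto simp: successively_Cons)
  have e: "(w@[y]) @ zs = (w @ butlast (y#zs)) @ [last (y#zs)]"
    by (metis append.assoc append_Cons append_Nil append_butlast_last_id list.distinct(1))
  have "allowable A ((w @ butlast (y#zs)) @ [last (y#zs)])"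
    using s e by (simp only: allowable_succ) simp
  moreover have "length (w @ butlast (y#zs)) = L + length zs" using w(2) by simp
  ultimately show ?thesis unfolding hasPast_def by blast
qed

lemma cycle_past:
  assumes "successively (\<lambda>a b. A$a$b = 1) (c @ [y])" "c \<noteq> []" "hd c = y"
  shows "hasPast A L y"
proof -
  let ?T = "\<lambda>a b. A$a$b = 1"
  have "allowable A (concat (replicate r c) @ [y])" for r
  proof (induction r)
    case 0 then show ?case by (simp add: allowable_succ)
  next
    case (Suc r)
    have h: "hd (concat (replicate r c) @ [y]) = y" using assms(2,3)
      by (cases r) auto
    have "successively ?T (c @ (concat (replicate r c) @ [y]))"
      using Suc assms(1,2) h unfolding allowable_succ successively_append_iff
      by (auto simp: last_append)
    then show ?case by (simp add: allowable_succ)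
  qed
  moreover have "length (concat (replicate r c)) = r * length c" for r by (induct r) auto
  ultimately have "hasPast A (r * length c) y" for r unfolding hasPast_def by metis
  moreover have "L \<le> L * length c" using assms(2) by (cases c) auto
  ultimately show ?thesis using hasPast_mono by blast
qed

lemma long_block_past:
  fixes A :: "real^'n^'n"
  assumes "allowable A b" "length b > CARD('n)"
  shows "hasPast A L (last b)"
proof -
  let ?T = "\<lambda>a b. A$a$b = 1"
  have "\<not> distinct b"
  proof
    assume "distinct b"
    then have "card (set b) = length b" by (simp add: distinct_card)
    moreover have "card (set b) \<le> CARD('n)" by (simp add: card_mono)
    ultimately show False using assms(2) by simp
  qed
  then obtain xs ys zs y where b: "b = xs @ [y] @ ys @ [y] @ zs"
    using not_distinct_decomp by blast
  have sb: "successively ?T b" using assms(1) allowable_succ by blast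
  have s1: "successively ?T ((y # ys) @ [y])"
    using sb unfolding b successively_append_iff by (auto simp: successively_Cons)
  have s2: "successively ?T (y # zs)"
    using sb unfolding b successively_append_iff by (cases zs) (auto simp: successively_Cons)
  have "hasPast A L y" by (rule cycle_past[OF s1]) auto
  then have "hasPast A (L + length zs) (last (y#zs))" using hasPast_extend s2 by blast
  moreover have "last b = last (y # zs)" unfolding b by simp
  ultimately show ?thesis using hasPast_mono le_add1 by metis
qed



definition Fm :: "real^'n^'n \<Rightarrow> ('f::real_algebra_1)^'n \<Rightarrow> 'f^'n" where
  "Fm A x = fmat A *v x"

lemma Fm_scale: "Fm A (c *s (x::'f::{field,real_algebra_1}^'n)) = c *s Fm A x"
  unfolding Fm_def by (rule vec.scale)

lemma Fm_add: "Fm A (x + y) = Fm A x + Fm A y"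
  unfolding Fm_def by (simp add: matrix_vector_right_distrib)

lemma Fm_diff: "Fm A (x - y) = Fm A x - Fm A (y::'f::real_algebra_1^'n)"
  unfolding Fm_def by (simp add: matrix_vector_mult_diff_distrib)

lemma Fm_zero: "Fm A 0 = 0" unfolding Fm_def by simp

lemma Fmpow_diff: "(Fm A ^^ t) (x - y) = (Fm A ^^ t) x - (Fm A ^^ t) (y::'f::real_algebra_1^'n)"
  by (induct t) (auto simp: Fm_diff)

context
  fixes A :: "real^'n^'n"
  assumes A01: "\<forall>i j. A$i$j = 0 \<or> A$i$j = 1"
begin

lemma Fm_comp: "Fm A (y::'f::real_algebra_1^'n) $ j = (\<Sum>k\<in>{k. A$j$k = 1}. y$k)"
proof -
  have "Fm A y $ j = (\<Sum>k\<in>UNIV. of_real (A$j$k) * y$k)"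
    by (simp add: Fm_def fmat_def matrix_vector_mult_def)
  also have "\<dots> = (\<Sum>k\<in>{k. A$j$k = 1}. of_real (A$j$k) * y$k)"
    by (rule sum.mono_neutral_right) (auto, metis A01 of_real_0 mult_zero_left)
  also have "\<dots> = (\<Sum>k\<in>{k. A$j$k = 1}. y$k)" by simp
  finally show ?thesis .
qed

lemma vanish_aux:
  "(\<forall>b. allowable A b \<and> length b = Suc t \<and> hd b = j \<longrightarrow> y $ last b = 0) \<Longrightarrow>
    ((Fm A ^^ t) (y::'f::real_algebra_1^'n)) $ j = 0"
proof (induction t arbitrary: j)
  case 0
  have "allowable A [j]" by (simp add: allowable_def)
  then show ?case using 0 by force
next
  case (Suc t)
  have "((Fm A ^^ t) y) $ k = 0" if k: "A$j$k = 1" for k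
  proof (rule Suc.IH, intro allI impI)
    fix b assume b: "allowable A b \<and> length b = Suc t \<and> hd b = k"
    then have "b \<noteq> []" by auto
    then have "allowable A (j # b)" using b k unfolding allowable_succ
      by (auto simp: successively_Cons)
    moreover have "length (j#b) = Suc (Suc t)" "hd (j#b) = j" using b by auto
    ultimately have "y $ last (j#b) = 0" using Suc.prems by blast
    then show "y $ last b = 0" using \<open>b \<noteq> []\<close> by simp
  qed
  then show ?case by (simp add: Fm_comp)
qed

lemma vanish:
  assumes "\<forall>k. hasPast A m k \<longrightarrow> y $ k = 0"
  shows "(Fm A ^^ CARD('n)) (y::'f::real_algebra_1^'n) = 0"
proof -
  have "((Fm A ^^ CARD('n)) y) $ j = 0" for j
  proof (rule vanish_aux, intro allI impI)
    fix b assume "allowable A b \<and> length b = Suc CARD('n) \<and> hd b = j"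
    then have "hasPast A m (last b)" using long_block_past[of A b m] by simp
    then show "y $ last b = 0" using assms by blast
  qed
  then show ?thesis by (simp add: vec_eq_iff)
qed

lemma thread_iter:
  assumes "v \<in> threads A"
  shows "v n = (Fm A ^^ t) ((v (n + t)) :: 'f::real_algebra_1^'n)"
proof (induction t)
  case 0 then show ?case by simp
next
  case (Suc t)
  have "\<forall>m. v m = Fm A (v (Suc m))" using assms unfolding threads_def Fm_def by blast
  then have "v (n + t) = Fm A (v (n + Suc t))" by (metis add_Suc_right)
  then show ?case using Suc by (simp add: funpow_swap1)
qed

lemma thread_unique:
  assumes "u \<in> threads A" "v \<in> threads A" "represents A K u" "represents A K v"
  shows "u = (v :: nat \<Rightarrow> 'f::real_algebra_1^'n)"
proof
  fix n
  let ?d = "CARD('n)"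
  have "\<forall>k. hasPast A (n + ?d) k \<longrightarrow> (u (n + ?d) - v (n + ?d)) $ k = 0"
  proof (intro allI impI)
    fix k assume "hasPast A (n + ?d) k"
    then obtain w where w: "allowable A (w@[k])" "length w = n + ?d" unfolding hasPast_def by blast
    have "u (n + ?d) $ k = K (w@[k])" using assms(3) w unfolding represents_def by blast
    moreover have "v (n + ?d) $ k = K (w@[k])" using assms(4) w unfolding represents_def by blast
    ultimately show "(u (n + ?d) - v (n + ?d)) $ k = 0" by simp
  qed
  then have "(Fm A ^^ ?d) (u (n + ?d) - v (n + ?d)) = 0" by (rule vanish)
  then show "u n = v n" using thread_iter[OF assms(1)] thread_iter[OF assms(2)]
    by (simp add: Fmpow_diff)
qed

lemma staf_zero: "K \<in> staf_space A \<Longrightarrow> \<not> allowable A xs \<Longrightarrow> K xs = 0"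
  unfolding staf_space_def by blast

lemma staf_add: "K \<in> staf_space A \<Longrightarrow> allowable A (w @ [j]) \<Longrightarrow>
        K (w @ [j]) = (\<Sum>k\<in>{k. A$j$k = 1}. K (w @ [j, k]))"
  unfolding staf_space_def by blast

lemma staf_coh: "K \<in> staf_space A \<Longrightarrow> allowable A (w @ [j]) \<Longrightarrow> allowable A (w' @ [j]) \<Longrightarrow>
   length w = length w' \<Longrightarrow> K (w @ [j]) = K (w' @ [j])"
  unfolding staf_space_def by blast

definition xv :: "('n list \<Rightarrow> 'f::zero) \<Rightarrow> nat \<Rightarrow> 'f^'n" where
  "xv K m = (\<chi> j. if hasPast A m j then K ((SOME w. allowable A (w@[j]) \<and> length w = m) @ [j]) else 0)"

lemma xv_eq:
  assumes "K \<in> staf_space A" "allowable A (w@[j])"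
  shows "xv K (length w) $ j = K (w@[j])"
proof -
  let ?w = "SOME w'. allowable A (w'@[j]) \<and> length w' = length w"
  have h: "hasPast A (length w) j" using assms(2) hasPast_def by blast
  have "\<exists>w'. allowable A (w'@[j]) \<and> length w' = length w" using assms(2) by blast
  then have "allowable A (?w@[j]) \<and> length ?w = length w" by (rule someI_ex)
  then have "K (?w @ [j]) = K (w @ [j])" using staf_coh[OF assms(1), of ?w j w] assms(2) by simp
  then show ?thesis using h unfolding xv_def by simp
qed

lemma xv_iter:
  assumes "K \<in> staf_space A" "allowable A (w@[j])"
  shows "((Fm A ^^ t) (xv K (length w + t))) $ j = (K (w@[j]) :: 'f::{field,real_algebra_1})"
  using assms(2)
proof (induction t arbitrary: w j)
  case 0 then show ?case using xv_eq[OF assms(1)] by simp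
next
  case (Suc t)
  have "((Fm A ^^ Suc t) (xv K (length w + Suc t))) $ j
      = (\<Sum>k\<in>{k. A$j$k = 1}. ((Fm A ^^ t) (xv K (length (w@[j]) + t))) $ k)"
    by (simp add: Fm_comp)
  also have "\<dots> = (\<Sum>k\<in>{k. A$j$k = 1}. K (w @ [j, k]))"
  proof (rule sum.cong)
    fix k assume "k \<in> {k. A$j$k = 1}"
    then have "allowable A ((w@[j])@[k])" using Suc.prems unfolding allowable_succ
      by (auto simp: successively_append_iff)
    then show "((Fm A ^^ t) (xv K (length (w@[j]) + t))) $ k = K (w @ [j, k])"
      using Suc.IH[of "w@[j]" k] by simp
  qed simp
  also have "\<dots> = K (w@[j])" using staf_add[OF assms(1) Suc.prems] by simp
  finally show ?case .
qed

definition vt :: "('n list \<Rightarrow> 'f::real_algebra_1) \<Rightarrow> nat \<Rightarrow> 'f^'n" where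
  "vt K n = (Fm A ^^ CARD('n)) (xv K (n + CARD('n)))"

lemma vt_represents:
  assumes "K \<in> staf_space A"
  shows "represents A K (vt K :: nat \<Rightarrow> 'f::{field,real_algebra_1}^'n)"
  unfolding represents_def
proof (intro allI impI)
  fix n w j assume h: "allowable A (w @ [j]) \<and> length w = n"
  then have "((Fm A ^^ CARD('n)) (xv K (length w + CARD('n)))) $ j = K (w@[j])"
    using xv_iter[OF assms] by blast
  then show "vt K n $ j = K (w @ [j])" using h unfolding vt_def by simp
qed

lemma vt_thread:
  assumes "K \<in> staf_space A"
  shows "(vt K :: nat \<Rightarrow> 'f::{field,real_algebra_1}^'n) \<in> threads A"
proof -
  let ?d = "CARD('n)"
  have "vt K n = Fm A (vt K (Suc n))" for n
  proof -
    let ?y = "Fm A (xv K (Suc (n + ?d))) - xv K (n + ?d)"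
    have "\<forall>k. hasPast A (n + ?d) k \<longrightarrow> ?y $ k = 0"
    proof (intro allI impI)
      fix k assume "hasPast A (n + ?d) k"
      then obtain w where w: "allowable A (w@[k])" "length w = n + ?d" unfolding hasPast_def by blast
      have "((Fm A ^^ 1) (xv K (length w + 1))) $ k = K (w@[k])" by (rule xv_iter[OF assms w(1)])
      moreover have "xv K (length w) $ k = K (w@[k])" by (rule xv_eq[OF assms w(1)])
      ultimately show "?y $ k = 0" using w(2) by simp
    qed
    then have "(Fm A ^^ ?d) ?y = 0" by (rule vanish)
    then have "(Fm A ^^ ?d) (Fm A (xv K (Suc (n + ?d)))) = (Fm A ^^ ?d) (xv K (n + ?d))"
      by (simp add: Fmpow_diff)
    then show ?thesis unfolding vt_def funpow_swap1 by simp
  qed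
  then show ?thesis unfolding threads_def Fm_def by blast
qed

lemma thread_ex1:
  assumes "K \<in> staf_space A"
  shows "\<exists>!v. v \<in> threads A \<and> represents A K (v :: nat \<Rightarrow> 'f::{field,real_algebra_1}^'n)"
proof (rule ex1I[of _ "vt K"])
  show "vt K \<in> threads A \<and> represents A K (vt K :: nat \<Rightarrow> 'f^'n)"
    using vt_thread[OF assms] vt_represents[OF assms] by (rule conjI)
next
  fix v :: "nat \<Rightarrow> 'f^'n" assume "v \<in> threads A \<and> represents A K v"
  then show "v = vt K" using thread_unique[of v "vt K" K] vt_thread[OF assms] vt_represents[OF assms]
    by blast
qed

lemma thread_of_eq:
  assumes "K \<in> staf_space A" "v \<in> threads A" "represents A K (v :: nat \<Rightarrow> 'f::{field,real_algebra_1}^'n)"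
  shows "thread_of A K = v"
  unfolding thread_of_def by (rule the1_equality[OF thread_ex1[OF assms(1)]]) (use assms(2,3) in blast)

lemma thread_of_prop:
  assumes "K \<in> staf_space A"
  shows "thread_of A K \<in> threads A \<and> represents A K (thread_of A K :: nat \<Rightarrow> 'f::{field,real_algebra_1}^'n)"
proof -
  have "thread_of A K = (vt K :: nat \<Rightarrow> 'f^'n)"
    by (rule thread_of_eq[OF assms vt_thread[OF assms] vt_represents[OF assms]])
  then show ?thesis using vt_thread[OF assms] vt_represents[OF assms] by simp
qed

end


context
  fixes A :: "real^'n^'n"
  assumes A01: "\<forall>i j. A$i$j = 0 \<or> A$i$j = 1"
begin

lemma staf_plus:
  assumes "K \<in> staf_space A" "L \<in> staf_space A"
  shows "(\<lambda>x. K x + L x) \<in> staf_space A"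
  unfolding staf_space_def
proof (intro CollectI conjI allI impI)
  fix xs assume "\<not> allowable A xs" then show "K xs + L xs = 0"
    using staf_zero[OF A01 assms(1)] staf_zero[OF A01 assms(2)] by simp
next
  fix w j assume h: "allowable A (w @ [j])"
  show "K (w @ [j]) + L (w @ [j]) = (\<Sum>k\<in>{k. A $ j $ k = 1}. K (w @ [j, k]) + L (w @ [j, k]))"
    using staf_add[OF A01 assms(1) h] staf_add[OF A01 assms(2) h] by (simp add: sum.distrib)
next
  fix w w' j assume h: "allowable A (w @ [j]) \<and> allowable A (w' @ [j]) \<and> length w = length w'"
  then show "K (w @ [j]) + L (w @ [j]) = K (w' @ [j]) + L (w' @ [j])"
    using staf_coh[OF A01 assms(1), of w j w'] staf_coh[OF A01 assms(2), of w j w'] by simp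
qed

lemma staf_smult:
  assumes "K \<in> staf_space A"
  shows "(\<lambda>x. c * K x) \<in> staf_space A"
  unfolding staf_space_def
proof (intro CollectI conjI allI impI)
  fix xs assume "\<not> allowable A xs" then show "c * K xs = 0"
    using staf_zero[OF A01 assms(1)] by simp
next
  fix w j assume h: "allowable A (w @ [j])"
  show "c * K (w @ [j]) = (\<Sum>k\<in>{k. A $ j $ k = 1}. c * K (w @ [j, k]))"
    using staf_add[OF A01 assms(1) h] by (simp add: sum_distrib_left)
next
  fix w w' j assume h: "allowable A (w @ [j]) \<and> allowable A (w' @ [j]) \<and> length w = length w'"
  then show "c * K (w @ [j]) = c * K (w' @ [j])"
    using staf_coh[OF A01 assms(1), of w j w'] by simp
qed

lemma thread_of_plus:
  fixes K L :: "'n list \<Rightarrow> 'f::{field,real_algebra_1}"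
  assumes "K \<in> staf_space A" "L \<in> staf_space A"
  shows "thread_of A (\<lambda>x. K x + L x) = (\<lambda>n. thread_of A K n + thread_of A L n)"
proof (rule thread_of_eq[OF A01 staf_plus[OF assms]])
  have t1: "\<forall>n. thread_of A K n = fmat A *v (thread_of A K (Suc n) :: 'f^'n)"
    using thread_of_prop[OF A01 assms(1)] unfolding threads_def by blast
  have t2: "\<forall>n. thread_of A L n = fmat A *v (thread_of A L (Suc n) :: 'f^'n)"
    using thread_of_prop[OF A01 assms(2)] unfolding threads_def by blast
  show "(\<lambda>n. thread_of A K n + thread_of A L n) \<in> threads A"
    unfolding threads_def
  proof (intro CollectI allI)
    fix n
    show "thread_of A K n + thread_of A L n =
      fmat A *v (thread_of A K (Suc n) + thread_of A L (Suc n) :: 'f^'n)"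
      by (subst t1[rule_format, of n], subst t2[rule_format, of n], rule matrix_vector_right_distrib[symmetric])
  qed
  have r1: "represents A K (thread_of A K :: nat \<Rightarrow> 'f^'n)" using thread_of_prop[OF A01 assms(1)] by blast
  have r2: "represents A L (thread_of A L :: nat \<Rightarrow> 'f^'n)" using thread_of_prop[OF A01 assms(2)] by blast
  show "represents A (\<lambda>x. K x + L x) (\<lambda>n. thread_of A K n + thread_of A L n)"
    using r1 r2 unfolding represents_def by simp
qed

lemma thread_of_smult:
  fixes K :: "'n list \<Rightarrow> 'f::{field,real_algebra_1}"
  assumes "K \<in> staf_space A"
  shows "thread_of A (\<lambda>x. c * K x) = (\<lambda>n. c *s thread_of A K n)"
proof (rule thread_of_eq[OF A01 staf_smult[OF assms]])
  have t1: "\<forall>n. thread_of A K n = fmat A *v (thread_of A K (Suc n) :: 'f^'n)"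
    using thread_of_prop[OF A01 assms(1)] unfolding threads_def by blast
  show "(\<lambda>n. c *s thread_of A K n) \<in> threads A"
    unfolding threads_def
  proof (intro CollectI allI)
    fix n
    show "c *s thread_of A K n = fmat A *v (c *s thread_of A K (Suc n) :: 'f^'n)"
      by (subst t1[rule_format, of n], rule vec.scale[symmetric])
  qed
  have r1: "represents A K (thread_of A K :: nat \<Rightarrow> 'f^'n)" using thread_of_prop[OF A01 assms(1)] by blast
  show "represents A (\<lambda>x. c * K x) (\<lambda>n. c *s thread_of A K n)"
    using r1 unfolding represents_def by simp
qed

lemma thread_of_inj:
  fixes K L :: "'n list \<Rightarrow> 'f::{field,real_algebra_1}"
  assumes "K \<in> staf_space A" "L \<in> staf_space A" "thread_of A K = thread_of A L"
  shows "K = L"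
proof
  fix xs
  show "K xs = L xs"
  proof (cases "allowable A xs")
    case True
    then have ne: "xs \<noteq> []" by (simp add: allowable_def)
    then have e: "xs = butlast xs @ [last xs]" by simp
    have r1: "represents A K (thread_of A K :: nat \<Rightarrow> 'f^'n)" using thread_of_prop[OF A01 assms(1)] by blast
    have r2: "represents A L (thread_of A L :: nat \<Rightarrow> 'f^'n)" using thread_of_prop[OF A01 assms(2)] by blast
    have a: "allowable A (butlast xs @ [last xs])" using True e by simp
    have "thread_of A K (length (butlast xs)) $ last xs = K (butlast xs @ [last xs])"
      using r1 a unfolding represents_def by blast
    moreover have "thread_of A L (length (butlast xs)) $ last xs = L (butlast xs @ [last xs])"
      using r2 a unfolding represents_def by blast
    ultimately have "K (butlast xs @ [last xs]) = L (butlast xs @ [last xs])" using assms(3) by simp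
    then show ?thesis using e by metis
  next
    case False
    then show ?thesis using staf_zero[OF A01 assms(1)] staf_zero[OF A01 assms(2)] by simp
  qed
qed

definition Kof :: "(nat \<Rightarrow> 'f^'n) \<Rightarrow> 'n list \<Rightarrow> 'f::zero" where
  "Kof v xs = (if allowable A xs then v (length xs - 1) $ last xs else 0)"

lemma Kof_staf:
  assumes "v \<in> threads A"
  shows "Kof (v :: nat \<Rightarrow> 'f::{field,real_algebra_1}^'n) \<in> staf_space A"
  unfolding staf_space_def
proof (intro CollectI conjI allI impI)
  fix xs assume "\<not> allowable A xs" then show "Kof v xs = 0" by (simp add: Kof_def)
next
  fix w j assume h: "allowable A (w @ [j])"
  have t: "v (length w) = Fm A (v (Suc (length w)))" using assms unfolding threads_def Fm_def by blast
  have "Kof v (w @ [j]) = v (length w) $ j" using h by (simp add: Kof_def)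
  also have "\<dots> = (\<Sum>k\<in>{k. A$j$k = 1}. v (Suc (length w)) $ k)" by (subst t) (rule Fm_comp[OF A01])
  also have "\<dots> = (\<Sum>k\<in>{k. A $ j $ k = 1}. Kof v (w @ [j, k]))"
  proof (rule sum.cong)
    fix k assume "k \<in> {k. A $ j $ k = 1}"
    then have "allowable A ((w @ [j]) @ [k])" using h unfolding allowable_succ
      by (auto simp: successively_append_iff)
    then show "v (Suc (length w)) $ k = Kof v (w @ [j, k])" by (simp add: Kof_def)
  qed simp
  finally show "Kof v (w @ [j]) = (\<Sum>k\<in>{k. A $ j $ k = 1}. Kof v (w @ [j, k]))" .
next
  fix w w' j assume h: "allowable A (w @ [j]) \<and> allowable A (w' @ [j]) \<and> length w = length w'"
  then show "Kof v (w @ [j]) = Kof v (w' @ [j])" by (simp add: Kof_def)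
qed

lemma Kof_thread:
  assumes "v \<in> threads A"
  shows "thread_of A (Kof v) = (v :: nat \<Rightarrow> 'f::{field,real_algebra_1}^'n)"
  by (rule thread_of_eq[OF A01 Kof_staf[OF assms] assms]) (simp add: represents_def Kof_def)

lemma thread_of_bij:
  "bij_betw (thread_of A) (staf_space A :: ('n list \<Rightarrow> 'f::{field,real_algebra_1}) set) (threads A)"
  unfolding bij_betw_def
proof
  show "inj_on (thread_of A) (staf_space A :: ('n list \<Rightarrow> 'f) set)"
    unfolding inj_on_def using thread_of_inj by blast
  show "thread_of A ` (staf_space A :: ('n list \<Rightarrow> 'f) set) = threads A"
  proof
    show "thread_of A ` (staf_space A :: ('n list \<Rightarrow> 'f) set) \<subseteq> threads A"
      using thread_of_prop[OF A01] by blast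
    show "threads A \<subseteq> thread_of A ` (staf_space A :: ('n list \<Rightarrow> 'f) set)"
    proof
      fix v :: "nat \<Rightarrow> 'f^'n" assume v: "v \<in> threads A"
      then show "v \<in> thread_of A ` staf_space A"
        using Kof_thread[OF v] Kof_staf[OF v] by (metis image_eqI)
    qed
  qed
qed

end


lemma Fm_linear: "Vector_Spaces.linear (*s) (*s) (Fm A :: 'f::{field,real_algebra_1}^'n \<Rightarrow> _)"
  unfolding Fm_def by (rule matrix_vector_mul_linear_gen)

lemma Fmpow_linear: "Vector_Spaces.linear (*s) (*s) ((Fm A ^^ m) :: 'f::{field,real_algebra_1}^'n \<Rightarrow> _)"
proof (induction m)
  case 0 then show ?case using vec.linear_id by (simp add: id_def)
next
  case (Suc m)
  have "Fm A ^^ Suc m = Fm A \<circ> (Fm A ^^ m)" by simp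
  then show ?case using Vector_Spaces.linear_compose[OF Suc Fm_linear[of A]] by metis
qed

lemma surj_on_imp_inj_on:
  fixes f :: "'f::field^'n \<Rightarrow> 'f^'n"
  assumes lf: "Vector_Spaces.linear (*s) (*s) f" and S: "vec.subspace S" and fS: "f ` S = S"
  shows "inj_on f S"
proof -
  interpret f: Vector_Spaces.linear "(*s)" "(*s)" f by (rule lf)
  obtain B where B: "B \<subseteq> S" "vec.independent B" "S \<subseteq> vec.span B" "card B = vec.dim S"
    using vec.basis_exists by blast
  have fin: "finite B" using B(2) vec.finiteI_independent by blast
  have sub: "f ` B \<subseteq> S" using B(1) fS by blast
  have sp: "S \<subseteq> vec.span (f ` B)"
  proof -
    have "S = f ` S" using fS by simp
    also have "\<dots> \<subseteq> f ` vec.span B" using B(3) by blast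
    also have "\<dots> = vec.span (f ` B)" by (simp add: f.span_image)
    finally show ?thesis .
  qed
  have c1: "card (f ` B) \<le> card B" using fin by (rule card_image_le)
  have ind: "vec.independent (f ` B)"
    by (rule vec.card_le_dim_spanning[OF sub sp]) (use fin c1 B(4) in auto)
  have "vec.dim S \<le> card (f ` B)" by (rule vec.dim_le_card[OF sp]) (use fin in auto)
  then have "card (f ` B) = card B" using c1 B(4) by simp
  then have "inj_on f B" by (rule eq_card_imp_inj_on[OF fin])
  then have "inj_on f (vec.span B)" using f.inj_on_span_iff_independent_image[OF ind] by simp
  then show ?thesis using B(3) inj_on_subset by blast
qed

definition Rinf :: "real^'n^'n \<Rightarrow> ('f::real_algebra_1^'n) set" where
  "Rinf A = {x. \<forall>m. x \<in> range (Fm A ^^ m)}"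

lemma range_Suc: "range (Fm A ^^ Suc m) = Fm A ` range (Fm A ^^ m)"
  by (simp add: image_comp)

lemma range_Suc_sub: "range ((Fm A ^^ Suc m) :: 'f::real_algebra_1^'n \<Rightarrow> _) \<subseteq> range (Fm A ^^ m)"
proof
  fix x :: "'f^'n" assume "x \<in> range (Fm A ^^ Suc m)"
  then obtain y where "x = (Fm A ^^ Suc m) y" by blast
  then have "x = (Fm A ^^ m) (Fm A y)" by (simp add: funpow_swap1)
  then show "x \<in> range (Fm A ^^ m)" by blast
qed

lemma range_anti: "m \<le> k \<Longrightarrow> range ((Fm A ^^ k) :: 'f::real_algebra_1^'n \<Rightarrow> _) \<subseteq> range (Fm A ^^ m)"
proof (induction k rule: dec_induct)
  case base then show ?case by simp
next
  case (step k) then show ?case using range_Suc_sub by blast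
qed

lemma range_sub: "vec.subspace (range ((Fm A ^^ m) :: 'f::{field,real_algebra_1}^'n \<Rightarrow> _))"
proof -
  interpret f: Vector_Spaces.linear "(*s)" "(*s)" "(Fm A ^^ m) :: 'f^'n \<Rightarrow> _" by (rule Fmpow_linear)
  show ?thesis by (rule f.subspace_image) (rule vec.subspace_UNIV)
qed

lemma range_stable:
  "\<exists>N. \<forall>k\<ge>N. range ((Fm A ^^ k) :: 'f::{field,real_algebra_1}^'n \<Rightarrow> _) = range (Fm A ^^ N)"
proof -
  let ?R = "\<lambda>m. range ((Fm A ^^ m) :: 'f^'n \<Rightarrow> _)"
  let ?d = "LEAST d. \<exists>m. vec.dim (?R m) = d"
  have "\<exists>m. vec.dim (?R m) = ?d" by (rule LeastI_ex) blast
  then obtain N where N: "vec.dim (?R N) = ?d" by blast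
  have mn: "vec.dim (?R N) \<le> vec.dim (?R m)" for m unfolding N by (rule Least_le) blast
  have eq1: "?R (Suc N) = ?R N"
    by (rule vec.subspace_dim_equal[OF range_sub range_sub range_Suc_sub mn])
  have RN: "?R (N + i) = ?R N" for i
  proof (induction i)
    case 0 then show ?case by simp
  next
    case (Suc i)
    have "?R (N + Suc i) = Fm A ` ?R (N + i)" unfolding add_Suc_right by (rule range_Suc)
    also have "\<dots> = Fm A ` ?R N" using Suc by simp
    also have "\<dots> = ?R (Suc N)" by (rule range_Suc[symmetric])
    finally show ?case using eq1 by simp
  qed
  show ?thesis
  proof (intro exI allI impI)
    fix k assume "N \<le> k"
    then obtain i where "k = N + i" using le_Suc_ex by blast
    then show "?R k = ?R N" using RN by simp
  qed
qed

lemma Rinf_eq: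
  assumes "\<forall>k\<ge>N. range ((Fm A ^^ k) :: 'f::{field,real_algebra_1}^'n \<Rightarrow> _) = range (Fm A ^^ N)"
  shows "(Rinf A :: ('f^'n) set) = range (Fm A ^^ N)"
proof
  show "Rinf A \<subseteq> range (Fm A ^^ N)" unfolding Rinf_def by blast
  show "range (Fm A ^^ N) \<subseteq> (Rinf A :: ('f^'n) set)"
  proof
    fix x :: "'f^'n" assume x: "x \<in> range (Fm A ^^ N)"
    have "x \<in> range (Fm A ^^ m)" for m
    proof (cases "m \<le> N")
      case True then show ?thesis using range_anti[OF True] x by blast
    next
      case False
      then have "range ((Fm A ^^ m) :: 'f^'n \<Rightarrow> _) = range (Fm A ^^ N)" using assms[rule_format, of m] False by simp
      then show ?thesis using x by simp
    qed
    then show "x \<in> Rinf A" unfolding Rinf_def by blast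
  qed
qed

lemma Rinf_props:
  "vec.subspace (Rinf A :: ('f::{field,real_algebra_1}^'n) set) \<and>
   Fm A ` (Rinf A :: ('f^'n) set) = Rinf A \<and> inj_on (Fm A) (Rinf A :: ('f^'n) set)"
proof -
  obtain N where N: "\<forall>k\<ge>N. range ((Fm A ^^ k) :: 'f^'n \<Rightarrow> _) = range (Fm A ^^ N)"
    using range_stable by blast
  have R: "(Rinf A :: ('f^'n) set) = range (Fm A ^^ N)" by (rule Rinf_eq[OF N])
  have s: "vec.subspace (Rinf A :: ('f^'n) set)" unfolding R by (rule range_sub)
  have rs: "Fm A ` range (Fm A ^^ N) = range ((Fm A ^^ Suc N) :: 'f^'n \<Rightarrow> _)" by (rule range_Suc[symmetric])
  have i: "Fm A ` (Rinf A :: ('f^'n) set) = Rinf A"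
    unfolding R rs using N[rule_format, of "Suc N"] by simp
  have "inj_on (Fm A) (Rinf A :: ('f^'n) set)" by (rule surj_on_imp_inj_on[OF Fm_linear s i])
  then show ?thesis using s i by blast
qed

context
  fixes A :: "real^'n^'n"
  assumes A01: "\<forall>i j. A$i$j = 0 \<or> A$i$j = 1"
begin

lemma thread_in_Rinf:
  assumes "v \<in> threads A"
  shows "v n \<in> (Rinf A :: ('f::{field,real_algebra_1}^'n) set)"
  unfolding Rinf_def
proof (intro CollectI allI)
  fix m
  have "v n = (Fm A ^^ m) (v (n + m))" by (rule thread_iter[OF A01 assms])
  then show "v n \<in> range (Fm A ^^ m)" by (rule image_eqI) simp
qed

lemma thread_step:
  assumes "v \<in> threads A"
  shows "v n = Fm A (v (Suc n))"
  using assms unfolding threads_def Fm_def by blast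

lemma Psi_bij:
  "bij_betw (\<lambda>v. v 0) (threads A) (Rinf A :: ('f::{field,real_algebra_1}^'n) set)"
  unfolding bij_betw_def
proof (intro conjI)
  have P: "vec.subspace (Rinf A :: ('f^'n) set)" "Fm A ` (Rinf A :: ('f^'n) set) = Rinf A"
    "inj_on (Fm A) (Rinf A :: ('f^'n) set)" using Rinf_props by blast+
  show "inj_on (\<lambda>v. v 0) (threads A :: (nat \<Rightarrow> 'f^'n) set)"
  proof (rule inj_onI)
    fix u v :: "nat \<Rightarrow> 'f^'n" assume u: "u \<in> threads A" and v: "v \<in> threads A" and e: "u 0 = v 0"
    have "u n = v n" for n
    proof (induction n)
      case 0 then show ?case using e .
    next
      case (Suc n)
      have "Fm A (u (Suc n)) = Fm A (v (Suc n))"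
        using Suc thread_step[OF u, of n] thread_step[OF v, of n] by simp
      then show ?case using P(3) thread_in_Rinf[OF u, of "Suc n"] thread_in_Rinf[OF v, of "Suc n"]
        unfolding inj_on_def by blast
    qed
    then show "u = v" by blast
  qed
  show "(\<lambda>v. v 0) ` threads A = (Rinf A :: ('f^'n) set)"
  proof
    show "(\<lambda>v. v 0) ` threads A \<subseteq> (Rinf A :: ('f^'n) set)" using thread_in_Rinf by blast
    show "(Rinf A :: ('f^'n) set) \<subseteq> (\<lambda>v. v 0) ` threads A"
    proof
      fix x :: "'f^'n" assume x: "x \<in> Rinf A"
      let ?g = "inv_into (Rinf A) (Fm A)"
      define v where "v k = (?g ^^ k) x" for k
      have vR: "v k \<in> Rinf A" for k
      proof (induction k)
        case 0 then show ?case using x by (simp add: v_def)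
      next
        case (Suc k)
        have "v (Suc k) = ?g (v k)" by (simp add: v_def)
        then show ?case using Suc P(2) by (metis inv_into_into)
      qed
      have "v k = Fm A (v (Suc k))" for k
      proof -
        have "v (Suc k) = ?g (v k)" by (simp add: v_def)
        then show ?thesis using vR[of k] P(2) by (metis f_inv_into_f)
      qed
      then have "v \<in> threads A" unfolding threads_def Fm_def by blast
      moreover have "v 0 = x" by (simp add: v_def)
      ultimately show "x \<in> (\<lambda>v. v 0) ` threads A" by blast
    qed
  qed
qed

end


definition ev :: "real^'n^'n \<Rightarrow> complex poly \<Rightarrow> complex^'n \<Rightarrow> complex^'n" where
  "ev A p = fold_coeffs (\<lambda>a g v. a *s v + Fm A (g v)) p (\<lambda>v. 0)"

lemma ev_0 [simp]: "ev A 0 v = 0"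
  by (simp add: ev_def)

lemma ev_pCons [simp]: "ev A (pCons a p) v = a *s v + Fm A (ev A p v)"
proof (cases "p = 0 \<and> a = 0")
  case True then show ?thesis by (simp add: Fm_zero)
next
  case False
  then have "a \<noteq> 0 \<or> p \<noteq> 0" by blast
  then show ?thesis unfolding ev_def
    by (cases "p = 0") (simp_all add: fold_coeffs_pCons_coeff_not_0_eq fold_coeffs_pCons_not_0_0_eq)
qed

lemma ev_add_v: "ev A p (x + y) = ev A p x + ev A p y"
  by (induct p) (simp_all add: Fm_add vector_add_ldistrib algebra_simps)

lemma ev_zero_v [simp]: "ev A p 0 = 0"
  by (induct p) (simp_all add: Fm_zero)

lemma ev_scale_v: "ev A p (c *s x) = c *s ev A p x"
  by (induct p) (simp_all add: Fm_scale Fm_add vector_smult_assoc vector_add_ldistrib mult.commute)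

lemma ev_Fm: "Fm A (ev A p v) = ev A p (Fm A v)"
  by (induct p) (simp_all add: Fm_add Fm_scale Fm_zero)

lemma ev_add: "ev A (p + q) v = ev A p v + ev A q v"
proof (induction p q rule: poly_induct2)
  case 0 then show ?case by simp
next
  case (pCons a p b q)
  then show ?case by (simp add: Fm_add vector_sadd_rdistrib algebra_simps)
qed

lemma ev_smult: "ev A (smult c p) v = c *s ev A p v"
  by (induct p) (simp_all add: Fm_add Fm_scale vector_smult_assoc vector_add_ldistrib)

lemma ev_mult: "ev A (p * q) v = ev A p (ev A q v)"
  by (induct p) (simp_all add: ev_add ev_smult Fm_zero)

lemma ev_1 [simp]: "ev A 1 v = v"
  by (simp add: one_pCons Fm_zero)

lemma ev_diff: "ev A (p - q) v = ev A p v - ev A q v"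
proof -
  have "ev A (p - q) v + ev A q v = ev A p v" by (metis ev_add diff_add_cancel)
  then show ?thesis by (simp add: eq_diff_eq)
qed

lemma ev_pow: "ev A (p ^ k) v = (ev A p ^^ k) v"
  by (induct k arbitrary: v) (simp_all add: ev_mult funpow_swap1)

lemma ev_X: "ev A [:0,1:] v = Fm A v"
  by (simp add: Fm_zero)

lemma ev_Xpow: "ev A ([:0,1:] ^ m) v = (Fm A ^^ m) v"
proof -
  have "ev A [:0,1:] = Fm A" using ev_X by blast
  then show ?thesis by (simp add: ev_pow)
qed

lemma mat_mult_vec: "mat e *v (x :: 'a::comm_ring_1^'n) = e *s x"
  apply (vector matrix_vector_mult_def mat_def)
  apply (simp add: if_distrib if_distribR cong del: if_weak_cong)
  done

lemma ev_lin: "ev A [:-e,1:] v = (fmat A - mat e) *v v"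
  by (simp add: Fm_zero Fm_def matrix_vector_mult_diff_rdistrib mat_mult_vec)

lemma ev_lin_pow: "ev A ([:-e,1:] ^ k) v = ((\<lambda>x. (fmat A - mat e) *v x) ^^ k) v"
proof -
  have "ev A [:-e,1:] = (\<lambda>x. (fmat A - mat e) *v x)" using ev_lin by blast
  then show ?thesis by (simp add: ev_pow)
qed



abbreviation Dm :: "real^'n^'n \<Rightarrow> complex \<Rightarrow> complex^'n \<Rightarrow> complex^'n" where
  "Dm A e \<equiv> (\<lambda>x. (fmat A - mat e) *v x)"

lemma Dpow_add: "(Dm A e ^^ k) (a + b) = (Dm A e ^^ k) a + (Dm A e ^^ k) b"
  by (induct k) (simp_all add: matrix_vector_right_distrib)

lemma Dpow_0: "(Dm A e ^^ k) 0 = 0"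
  by (induct k) simp_all

lemma W_zero: "0 \<in> gen_eigenspace (fmat A) e"
  unfolding gen_eigenspace_def using Dpow_0 by blast

lemma W_add:
  assumes "a \<in> gen_eigenspace (fmat A) e" "b \<in> gen_eigenspace (fmat A) e"
  shows "a + b \<in> gen_eigenspace (fmat A) e"
proof -
  obtain k where k: "(Dm A e ^^ k) a = 0" using assms(1) unfolding gen_eigenspace_def by blast
  obtain l where l: "(Dm A e ^^ l) b = 0" using assms(2) unfolding gen_eigenspace_def by blast
  have "(Dm A e ^^ (l + k)) a = 0" by (simp add: funpow_add k Dpow_0)
  moreover have "(Dm A e ^^ (k + l)) b = 0" by (simp add: funpow_add l Dpow_0)
  ultimately have "(Dm A e ^^ (k + l)) (a + b) = 0" by (simp add: Dpow_add add.commute)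
  then show ?thesis unfolding gen_eigenspace_def by blast
qed

definition GS :: "real^'n^'n \<Rightarrow> (complex^'n) set" where
  "GS A = {v. \<exists>S f. finite S \<and> (\<forall>e\<in>S. f e \<in> gen_eigenspace (fmat A) e) \<and> v = (\<Sum>e\<in>S. f e)}"

lemma GS_zero: "0 \<in> GS A"
  unfolding GS_def by (rule CollectI, rule exI[of _ "{}"]) simp

lemma GS_add:
  assumes "v \<in> GS A" "a \<in> gen_eigenspace (fmat A) z"
  shows "v + a \<in> GS A"
proof -
  obtain S f where S: "finite S" "\<forall>e\<in>S. f e \<in> gen_eigenspace (fmat A) e" "v = (\<Sum>e\<in>S. f e)"
    using assms(1) unfolding GS_def by blast
  show ?thesis
  proof (cases "z \<in> S")
    case True
    let ?f = "f(z := f z + a)"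
    have "(\<Sum>e\<in>S. ?f e) = ?f z + (\<Sum>e\<in>S-{z}. ?f e)" by (rule sum.remove[OF S(1) True])
    also have "(\<Sum>e\<in>S-{z}. ?f e) = (\<Sum>e\<in>S-{z}. f e)" by (rule sum.cong) auto
    also have "?f z + (\<Sum>e\<in>S-{z}. f e) = a + (f z + (\<Sum>e\<in>S-{z}. f e))" by simp
    also have "f z + (\<Sum>e\<in>S-{z}. f e) = v" using S(3) sum.remove[OF S(1) True, of f] by simp
    finally have e: "v + a = (\<Sum>e\<in>S. ?f e)" by (simp add: add.commute)
    have fz: "f z + a \<in> gen_eigenspace (fmat A) z" using W_add[of "f z" A z a] S(2) assms(2) True by blast
    have "\<forall>e\<in>S. ?f e \<in> gen_eigenspace (fmat A) e" using S(2) fz by auto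
    then show ?thesis unfolding GS_def using S(1) e by blast
  next
    case False
    let ?f = "f(z := a)"
    have "(\<Sum>e\<in>insert z S. ?f e) = ?f z + (\<Sum>e\<in>S. ?f e)" using S(1) False by simp
    also have "(\<Sum>e\<in>S. ?f e) = (\<Sum>e\<in>S. f e)" by (rule sum.cong) (use False in auto)
    finally have e: "v + a = (\<Sum>e\<in>insert z S. ?f e)" using S(3) by (simp add: add.commute)
    have "\<forall>e\<in>insert z S. ?f e \<in> gen_eigenspace (fmat A) e" using S(2) assms(2) False by auto
    then show ?thesis unfolding GS_def using S(1) e by blast
  qed
qed

lemma W_of_ev:
  assumes "ev A ([:-z,1:] ^ m) a = 0"
  shows "a \<in> gen_eigenspace (fmat A) z"
  using assms unfolding gen_eigenspace_def ev_lin_pow by blast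

lemma decomp:
  assumes "p \<noteq> 0" "ev A p v = 0"
  shows "v \<in> GS A"
  using assms
proof (induction "degree p" arbitrary: p v rule: less_induct)
  case less
  show ?case
  proof (cases "degree p = 0")
    case True
    then obtain c where p: "p = [:c:]" by (metis degree_eq_zeroE)
    then have "c \<noteq> 0" using less.prems(1) by simp
    moreover have "c *s v = 0" using less.prems(2) p by (simp add: Fm_zero)
    ultimately have "v = 0" by (metis vector_smult_assoc vector_smult_lid left_inverse vector_smult_rzero)
    then show ?thesis using GS_zero by simp
  next
    case False
    then have "\<not> constant (poly p)" by (simp add: constant_degree)
    then obtain z where z: "poly p z = 0" using fundamental_theorem_of_algebra by blast
    define m where "m = order z p"
    obtain q where pq: "p = [:-z,1:] ^ m * q" and nd: "\<not> [:-z,1:] dvd q"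
      using order_decomp[OF less.prems(1)] unfolding m_def by blast
    have m0: "m \<noteq> 0" using z less.prems(1) order_root unfolding m_def by blast
    have q0: "q \<noteq> 0" using pq less.prems(1) by auto
    have "degree p = m + degree q" unfolding pq
      by (subst degree_mult_eq) (use q0 in \<open>auto simp: degree_linear_power\<close>)
    then have dq: "degree q < degree p" using m0 by simp
    have pe: "prime_elem [:-z,1::complex:]" by (rule prime_elem_linear_field_poly) simp
    have "coprime [:-z,1:] q" by (rule prime_elem_imp_coprime[OF pe nd])
    then have cop: "coprime ([:-z,1:] ^ m) q" by simp
    define s where "s = fst (bezout_coefficients ([:-z,1:] ^ m) q)"
    define t where "t = snd (bezout_coefficients ([:-z,1:] ^ m) q)"
    have st: "s * [:-z,1:] ^ m + t * q = 1"
      using bezout_coefficients_fst_snd[of "[:-z,1:] ^ m" q] cop unfolding s_def t_def by simp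
    have "v = ev A (s * [:-z,1:] ^ m) v + ev A (t * q) v"
      by (metis st ev_add ev_1)
    moreover have "ev A (t * q) v \<in> gen_eigenspace (fmat A) z"
    proof (rule W_of_ev)
      have "ev A ([:-z,1:] ^ m) (ev A (t * q) v) = ev A (t * p) v"
        by (simp add: pq ev_mult[symmetric] mult_ac)
      also have "\<dots> = 0" by (simp add: ev_mult less.prems(2))
      finally show "ev A ([:-z,1:] ^ m) (ev A (t * q) v) = 0" .
    qed
    moreover have "ev A (s * [:-z,1:] ^ m) v \<in> GS A"
    proof (rule less.hyps[OF dq q0])
      have "ev A q (ev A (s * [:-z,1:] ^ m) v) = ev A (s * p) v"
        by (simp add: pq ev_mult[symmetric] mult_ac)
      also have "\<dots> = 0" by (simp add: ev_mult less.prems(2))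
      finally show "ev A q (ev A (s * [:-z,1:] ^ m) v) = 0" .
    qed
    ultimately show ?thesis using GS_add by metis
  qed
qed



lemma ev_sum: "ev A (\<Sum>i\<in>I. p i) v = (\<Sum>i\<in>I. ev A (p i) v)"
  by (induct I rule: infinite_finite_induct) (simp_all add: ev_add)

lemma ev_monom: "ev A (monom c i) v = c *s (Fm A ^^ i) v"
  by (simp add: monom_altdef ev_smult ev_Xpow)

lemma annih:
  fixes A :: "real^'n^'n" and v :: "complex^'n"
  shows "\<exists>p. p \<noteq> 0 \<and> ev A p v = 0"
proof -
  let ?g = "\<lambda>i. (Fm A ^^ i) v :: complex^'n"
  let ?n = "CARD('n)"
  show ?thesis
  proof (cases "inj_on ?g {0..?n}")
    case False
    then obtain i j where ij: "i \<noteq> j" "?g i = ?g j" unfolding inj_on_def by blast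
    let ?p = "[:0,1:] ^ i - [:0,1::complex:] ^ j"
    have "?p \<noteq> 0"
    proof
      assume "?p = 0"
      then have "degree ([:0,1::complex:] ^ i) = degree ([:0,1::complex:] ^ j)" by simp
      then show False using ij(1) by (simp add: degree_linear_power)
    qed
    moreover have "ev A ?p v = 0" using ij(2) by (simp add: ev_diff ev_Xpow)
    ultimately show ?thesis by blast
  next
    case True
    let ?P = "?g ` {0..?n}"
    have cP: "card ?P = Suc ?n" using True by (simp add: card_image)
    have "vec.dim ?P \<le> ?n"
      using vec.dim_subset_UNIV[of ?P] unfolding vec.dimension_def
      by (simp add: card_cart_basis)
    then have "vec.dependent ?P" using cP by (intro vec.dependent_biggerset_general) simp
    then obtain t u where t: "finite t" "t \<subseteq> ?P" "(\<Sum>w\<in>t. u w *s w) = 0" and w: "\<exists>w\<in>t. u w \<noteq> 0"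
      unfolding vec.dependent_explicit by blast
    define I where "I = {i\<in>{0..?n}. ?g i \<in> t}"
    have injI: "inj_on ?g I" using True unfolding I_def inj_on_def by blast
    have gI: "?g ` I = t" using t(2) unfolding I_def by blast
    have finI: "finite I" unfolding I_def by simp
    define p where "p = (\<Sum>i\<in>I. monom (u (?g i)) i)"
    have cp: "coeff p j = (if j \<in> I then u (?g j) else 0)" for j
      unfolding p_def coeff_sum using finI by (simp add: if_distrib cong: if_cong)
    obtain w0 where w0: "w0 \<in> t" "u w0 \<noteq> 0" using w by blast
    then obtain j where j: "j \<in> I" "?g j = w0" using gI by blast
    have "coeff p j \<noteq> 0" using cp j w0 by simp
    then have "p \<noteq> 0" by auto
    moreover have "ev A p v = 0"
    proof -
      have "ev A p v = (\<Sum>i\<in>I. u (?g i) *s ?g i)" unfolding p_def ev_sum ev_monom ..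
      also have "\<dots> = (\<Sum>w\<in>?g ` I. u w *s w)" by (rule sum.reindex[OF injI, symmetric, unfolded comp_def])
      also have "\<dots> = 0" using gI t(3) by simp
      finally show ?thesis .
    qed
    ultimately show ?thesis by blast
  qed
qed

lemma W_in_range:
  assumes "e \<noteq> 0" "x \<in> gen_eigenspace (fmat A) e"
  shows "x \<in> range ((Fm A ^^ m) :: complex^'n \<Rightarrow> _)"
proof -
  obtain k where k: "(Dm A e ^^ k) x = 0" using assms(2) unfolding gen_eigenspace_def by blast
  then have ek: "ev A ([:-e,1:] ^ k) x = 0" by (simp add: ev_lin_pow)
  have pe: "prime_elem [:0,1::complex:]" by (rule prime_elem_linear_field_poly) simp
  have nd: "\<not> [:0,1:] dvd [:-e,1:]" using poly_eq_0_iff_dvd[of "[:-e,1:]" 0] assms(1) by simp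
  have "coprime [:0,1:] [:-e,1:]" by (rule prime_elem_imp_coprime[OF pe nd])
  then have cop: "coprime ([:0,1:] ^ m) ([:-e,1:] ^ k)" by simp
  define s where "s = fst (bezout_coefficients ([:0,1:] ^ m) ([:-e,1:] ^ k))"
  define t where "t = snd (bezout_coefficients ([:0,1:] ^ m) ([:-e,1:] ^ k))"
  have st: "s * [:0,1:] ^ m + t * [:-e,1:] ^ k = 1"
    using bezout_coefficients_fst_snd[of "[:0,1:] ^ m" "[:-e,1:] ^ k"] cop unfolding s_def t_def by simp
  have "x = ev A (s * [:0,1:] ^ m) x + ev A (t * [:-e,1:] ^ k) x"
    by (metis st ev_add ev_1)
  also have "ev A (t * [:-e,1:] ^ k) x = 0" by (simp add: ev_mult ek)
  also have "ev A (s * [:0,1:] ^ m) x = (Fm A ^^ m) (ev A s x)"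
    by (simp add: mult.commute[of s] ev_mult ev_Xpow)
  finally show ?thesis by simp
qed

lemma nil_inj:
  assumes "w \<in> (Rinf A :: (complex^'n) set)" "(Fm A ^^ k) w = 0"
  shows "w = 0"
  using assms
proof (induction k arbitrary: w)
  case 0 then show ?case by simp
next
  case (Suc k)
  have P: "vec.subspace (Rinf A :: (complex^'n) set)" "Fm A ` (Rinf A :: (complex^'n) set) = Rinf A"
    "inj_on (Fm A) (Rinf A :: (complex^'n) set)" using Rinf_props by blast+
  have "Fm A w \<in> Rinf A" using Suc.prems(1) P(2) by blast
  moreover have "(Fm A ^^ k) (Fm A w) = 0" using Suc.prems(2) by (simp add: funpow_swap1)
  ultimately have "Fm A w = 0" by (rule Suc.IH)
  then have "Fm A w = Fm A 0" by (simp add: Fm_zero)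
  moreover have "(0 :: complex^'n) \<in> Rinf A" using P(1) by (rule vec.subspace_0)
  ultimately show ?case using P(3) Suc.prems(1) unfolding inj_on_def by blast
qed

lemma Rinf_complex: "(Rinf A :: (complex^'n) set) = NonN_complex A"
proof
  have P: "vec.subspace (Rinf A :: (complex^'n) set)" using Rinf_props by blast
  have WR: "x \<in> Rinf A" if "e \<noteq> 0" "x \<in> gen_eigenspace (fmat A) e" for e and x :: "complex^'n"
    unfolding Rinf_def using W_in_range[OF that] by blast
  show "NonN_complex A \<subseteq> (Rinf A :: (complex^'n) set)"
  proof
    fix v assume "v \<in> NonN_complex A"
    then obtain S f where S: "finite S" "0 \<notin> S" "\<forall>e\<in>S. f e \<in> gen_eigenspace (fmat A) e" "v = (\<Sum>e\<in>S. f e)"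
      unfolding NonN_complex_def by blast
    have "(\<Sum>e\<in>S. f e) \<in> Rinf A"
    proof (rule vec.subspace_sum[OF P])
      fix e assume e: "e \<in> S"
      then have "e \<noteq> 0" using S(2) by blast
      moreover have "f e \<in> gen_eigenspace (fmat A) e" using S(3) e by blast
      ultimately show "f e \<in> Rinf A" by (rule WR)
    qed
    then show "v \<in> Rinf A" using S(4) by simp
  qed
  show "(Rinf A :: (complex^'n) set) \<subseteq> NonN_complex A"
  proof
    fix v :: "complex^'n" assume v: "v \<in> Rinf A"
    obtain p where p: "p \<noteq> 0" "ev A p v = 0" using annih by blast
    have "v \<in> GS A" by (rule decomp[OF p])
    then obtain S f where S: "finite S" "\<forall>e\<in>S. f e \<in> gen_eigenspace (fmat A) e" "v = (\<Sum>e\<in>S. f e)"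
      unfolding GS_def by blast
    let ?u = "\<Sum>e\<in>S-{0}. f e"
    have uR: "?u \<in> Rinf A"
    proof (rule vec.subspace_sum[OF P])
      fix e assume e: "e \<in> S - {0}"
      then have "e \<noteq> 0" by blast
      moreover have "f e \<in> gen_eigenspace (fmat A) e" using S(2) e by blast
      ultimately show "f e \<in> Rinf A" by (rule WR)
    qed
    have vu: "v = ?u"
    proof (cases "0 \<in> S")
      case True
      have vs: "v = f 0 + ?u" using S(3) sum.remove[OF S(1) True, of f] by simp
      then have "f 0 = v - ?u" by simp
      then have f0R: "f 0 \<in> Rinf A" using vec.subspace_diff[OF P v uR] by simp
      obtain k where k: "(Dm A 0 ^^ k) (f 0) = 0" using S(2) True unfolding gen_eigenspace_def by blast
      have "Dm A 0 = Fm A" by (simp add: Fm_def fun_eq_iff)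
      then have "(Fm A ^^ k) (f 0) = 0" using k by simp
      then have "f 0 = 0" by (rule nil_inj[OF f0R])
      then show ?thesis using vs by simp
    next
      case False
      then show ?thesis using S(3) by simp
    qed
    have "finite (S-{0}) \<and> 0 \<notin> S-{0} \<and> (\<forall>e\<in>S-{0}. f e \<in> gen_eigenspace (fmat A) e) \<and> v = (\<Sum>e\<in>S-{0}. f e)"
      using S(1,2) vu by blast
    then show "v \<in> NonN_complex A" unfolding NonN_complex_def by blast
  qed
qed

definition cvec :: "real^'n \<Rightarrow> complex^'n" where "cvec x = (\<chi> i. complex_of_real (x$i))"
definition rvec :: "complex^'n \<Rightarrow> real^'n" where "rvec z = (\<chi> i. Re (z$i))"

lemma Fm_cvec: "Fm A (cvec x) = cvec (Fm A x)"
  by (simp add: vec_eq_iff Fm_def fmat_def matrix_vector_mult_def cvec_def)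

lemma Fm_rvec: "Fm A (rvec z) = rvec (Fm A z)"
  by (simp add: vec_eq_iff Fm_def fmat_def matrix_vector_mult_def rvec_def Re_sum)

lemma Fmpow_cvec: "(Fm A ^^ m) (cvec x) = cvec ((Fm A ^^ m) x)"
  by (induct m) (simp_all add: Fm_cvec)

lemma Fmpow_rvec: "(Fm A ^^ m) (rvec z) = rvec ((Fm A ^^ m) z)"
  by (induct m) (simp_all add: Fm_rvec)

lemma rvec_cvec: "rvec (cvec x) = x"
  by (simp add: vec_eq_iff rvec_def cvec_def)

lemma Rinf_real: "(Rinf A :: (real^'n) set) = NonN_real A"
proof -
  have "x \<in> Rinf A \<longleftrightarrow> cvec x \<in> (Rinf A :: (complex^'n) set)" for x :: "real^'n"
  proof
    assume "x \<in> Rinf A"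
    then have "\<forall>m. \<exists>y. x = (Fm A ^^ m) y" unfolding Rinf_def by blast
    then have "\<forall>m. \<exists>y. cvec x = (Fm A ^^ m) (cvec y)" by (metis Fmpow_cvec)
    then show "cvec x \<in> (Rinf A :: (complex^'n) set)" unfolding Rinf_def by blast
  next
    assume "cvec x \<in> (Rinf A :: (complex^'n) set)"
    then have "\<forall>m. \<exists>z. cvec x = (Fm A ^^ m) z" unfolding Rinf_def by blast
    then have "\<forall>m. \<exists>z. x = (Fm A ^^ m) (rvec z)" by (metis Fmpow_rvec rvec_cvec)
    then show "x \<in> Rinf A" unfolding Rinf_def by blast
  qed
  then show ?thesis unfolding NonN_real_def Rinf_complex[symmetric] cvec_def by blast
qed


lemma claim_generic:
  fixes A :: "real^'n^'n" and N :: "('f::{field,real_algebra_1}^'n) set"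
  assumes A01: "\<forall>i j. A$i$j = 0 \<or> A$i$j = 1" and RN: "Rinf A = N"
  shows "staf_thread_claim A N"
  unfolding staf_thread_claim_def
proof (intro conjI)
  show "\<forall>K\<in>(staf_space A :: ('n list \<Rightarrow> 'f) set). \<exists>!v. v \<in> threads A \<and> represents A K v"
    using thread_ex1[OF A01] by blast
  show "\<forall>K\<in>(staf_space A :: ('n list \<Rightarrow> 'f) set). \<forall>L\<in>staf_space A. \<forall>c::'f.
        thread_of A (\<lambda>x. K x + L x) = (\<lambda>n. thread_of A K n + thread_of A L n) \<and>
        thread_of A (\<lambda>x. c * K x) = (\<lambda>n. c *s thread_of A K n)"
    using thread_of_plus[OF A01] thread_of_smult[OF A01] by blast
  show "bij_betw (thread_of A) (staf_space A :: ('n list \<Rightarrow> 'f) set) (threads A)"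
    by (rule thread_of_bij[OF A01])
  show "\<exists>\<Psi> :: (nat \<Rightarrow> 'f^'n) \<Rightarrow> 'f^'n.
        (\<forall>v \<in> threads A. \<forall>u \<in> threads A. \<forall>c::'f.
           \<Psi> (\<lambda>n. v n + u n) = \<Psi> v + \<Psi> u \<and> \<Psi> (\<lambda>n. c *s v n) = c *s \<Psi> v) \<and>
        bij_betw \<Psi> (threads A) N"
  proof (intro exI[of _ "\<lambda>v. v 0"] conjI)
    show "bij_betw (\<lambda>v. v 0) (threads A) N" unfolding RN[symmetric] by (rule Psi_bij[OF A01])
  qed simp
qed

theorem fact8p2:
  fixes A :: "real^'n^'n"
  assumes "\<forall>i j. A$i$j = 0 \<or> A$i$j = 1"
  shows "staf_thread_claim A (NonN_real A) \<and> staf_thread_claim A (NonN_complex A)"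
  using claim_generic[OF assms Rinf_real] claim_generic[OF assms Rinf_complex] by blast

end
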